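(* Let $p$ be a prime and $D$ an integer with $1 \le D \le p-1$. Let $k\ge1$, let $A_1,\dots,A_k\subseteq\mathbb{Z}_p$ be $D$-APs, and let $g_0,g_1\in\mathbb{Z}_p$. If $\mathrm{dist}_{p,D}(g_0,g_1) \ge \big|\sum_{i=1}^k A_i\big|$, then $g_0$ and $g_1$ are not both elements of $\sum_{i=1}^k A_i$.
   Context: $\mathbb{Z}_p=\{0,\dots,p-1\}$ under addition mod $p$. Sumset: $\sum_{i=1}^k A_i=\{a_1+\dots+a_k\bmod p : a_i\in A_i\}$. For $b\in\{0,\dots,D-1\}$, the $D$-AP with base $b$ is $A_{(b)}=\{b+iD : i\text{ integer},\ 0\le i\le\lfloor (p-1-b)/D\rfloor\}\subseteq\mathbb{Z}_p$; a $D$-AP is any set of this form. For $g_0,g_1\in\mathbb{Z}_p$, $\mathrm{dist}_{p,D}(g_0,g_1)=\min\{(g_1-g_0)D^{-1}\bmod p,\ (g_0-g_1)D^{-1}\bmod p\}$, with each term viewed as an integer in $\{0,\dots,p-1\}$ and $D^{-1}$ the inverse of $D$ mod $p$. *)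

theory Defs
  imports "HOL-Number_Theory.Number_Theory"
begin

text \<open>Elements of Z_p are represented by naturals in {0..<p}.\<close>

definition D_AP_base :: "nat \<Rightarrow> nat \<Rightarrow> nat \<Rightarrow> nat set" where
  "D_AP_base p D b = {b + i * D | i. i \<le> (p - 1 - b) div D}"

definition is_D_AP :: "nat \<Rightarrow> nat \<Rightarrow> nat set \<Rightarrow> bool" where
  "is_D_AP p D A \<longleftrightarrow> (\<exists>b < D. A = D_AP_base p D b)"

definition sumset :: "nat \<Rightarrow> nat \<Rightarrow> (nat \<Rightarrow> nat set) \<Rightarrow> nat set" where
  "sumset p k A = {(\<Sum>i=1..k. a i) mod p | a. \<forall>i\<in>{1..k}. a i \<in> A i}"

definition inv_modp :: "nat \<Rightarrow> nat \<Rightarrow> int" where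
  "inv_modp p D = (THE x. 0 \<le> x \<and> x < int p \<and> [int D * x = 1] (mod int p))"

definition dist_pD :: "nat \<Rightarrow> nat \<Rightarrow> nat \<Rightarrow> nat \<Rightarrow> int" where
  "dist_pD p D g0 g1 =
     min (((int g1 - int g0) * inv_modp p D) mod int p)
         (((int g0 - int g1) * inv_modp p D) mod int p)"

end

theory Submission
  imports Defs
begin

lemma inv_modp_prop:
  assumes "prime p" "1 \<le> D" "D < p"
  shows "[int D * inv_modp p D = 1] (mod int p)"
proof -
  have cop: "coprime (int D) (int p)"
  proof -
    have "\<not> p dvd D" using assms by (auto dest: dvd_imp_le)
    hence "coprime p D" using assms(1) prime_imp_coprime by blast
    thus ?thesis by (simp add: coprime_commute)
  qed
  obtain x where x: "[int D * x = 1] (mod int p)" using cong_solve_coprime_int[OF cop] by blast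
  have p0: "int p > 0" using assms(1) prime_gt_0_nat by simp
  let ?P = "\<lambda>y. 0 \<le> y \<and> y < int p \<and> [int D * y = 1] (mod int p)"
  have ex: "?P (x mod int p)"
    using p0 x by (metis cong_def cong_mult_self_right cong_scalar_left cong_trans mod_mod_trivial
        pos_mod_sign pos_mod_bound mod_mult_right_eq)
  have un: "y = x mod int p" if "?P y" for y
  proof -
    have "[int D * y = int D * (x mod int p)] (mod int p)"
      using that ex by (meson cong_sym cong_trans)
    hence "[y = x mod int p] (mod int p)" using cop by (simp add: cong_mult_lcancel)
    thus ?thesis using that ex cong_less_imp_eq_int by blast
  qed
  have "?P (inv_modp p D)" unfolding inv_modp_def
    by (rule theI[of ?P, OF ex un])
  thus ?thesis by blast
qed

lemma split_sum:
  fixes n :: "nat \<Rightarrow> nat"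
  assumes "finite I" "J \<le> sum n I"
  shows "\<exists>j. (\<forall>i\<in>I. j i \<le> n i) \<and> sum j I = J"
  using assms
proof (induction I arbitrary: J rule: finite_induct)
  case empty thus ?case by auto
next
  case (insert i I)
  show ?case
  proof (cases "J \<le> sum n I")
    case True
    then obtain j where j: "\<forall>i\<in>I. j i \<le> n i" "sum j I = J" using insert by blast
    let ?j = "j(i := 0)"
    have "sum ?j I = sum j I" using insert(2) by (intro sum.cong) auto
    thus ?thesis using j insert(1,2) by (intro exI[of _ ?j]) auto
  next
    case False
    let ?j = "n(i := J - sum n I)"
    have "sum ?j I = sum n I" using insert(2) by (intro sum.cong) auto
    thus ?thesis using False insert by (intro exI[of _ ?j]) auto
  qed
qed

lemma dist_bound:
  assumes "prime p" "1 \<le> D" "D < p" "J0 \<le> J1"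
    and "g0 = (B + J0 * D) mod p" "g1 = (B + J1 * D) mod p"
  shows "((int g1 - int g0) * inv_modp p D) mod int p \<le> int (J1 - J0)"
proof -
  have iv: "[int D * inv_modp p D = 1] (mod int p)" using inv_modp_prop assms by blast
  have c1: "[int g1 = int B + int J1 * int D] (mod int p)"
    using assms(6) by (simp add: cong_def zmod_int)
  have c0: "[int g0 = int B + int J0 * int D] (mod int p)"
    using assms(5) by (simp add: cong_def zmod_int)
  have "[int g1 - int g0 = (int B + int J1 * int D) - (int B + int J0 * int D)] (mod int p)"
    using c0 c1 cong_diff by blast
  hence "[int g1 - int g0 = (int J1 - int J0) * int D] (mod int p)"
    by (simp add: algebra_simps)
  hence "[(int g1 - int g0) * inv_modp p D = ((int J1 - int J0) * int D) * inv_modp p D] (mod int p)"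
    by (rule cong_scalar_right)
  moreover have "[((int J1 - int J0) * int D) * inv_modp p D = (int J1 - int J0) * 1] (mod int p)"
    using cong_scalar_left[OF iv, of "int J1 - int J0"] by (simp add: mult.assoc)
  ultimately have "[(int g1 - int g0) * inv_modp p D = int (J1 - J0)] (mod int p)"
    using assms(4) by (simp add: of_nat_diff) (meson cong_trans)
  hence "((int g1 - int g0) * inv_modp p D) mod int p = int (J1 - J0) mod int p"
    by (simp add: cong_def)
  also have "\<dots> \<le> int (J1 - J0)"
    using assms(1) prime_gt_0_nat by (intro zmod_le_nonneg_dividend) auto
  finally show ?thesis .
qed

lemma card_bound:
  assumes "prime p" "1 \<le> D" "D < p" "J0 \<le> J1"
    and "\<forall>J. J0 \<le> J \<and> J \<le> J1 \<longrightarrow> (B + J * D) mod p \<in> S" "finite S"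
  shows "min (J1 - J0) (p - 1) + 1 \<le> card S"
proof -
  define m where "m = min (J1 - J0) (p - 1)"
  let ?f = "\<lambda>J. (B + J * D) mod p"
  have ndvd: "\<not> p dvd D" using assms by (auto dest: dvd_imp_le)
  have inj: "inj_on ?f {J0..J0+m}"
  proof
    fix x y assume x: "x \<in> {J0..J0+m}" and y: "y \<in> {J0..J0+m}" and e: "?f x = ?f y"
    have "[B + x * D = B + y * D] (mod p)" using e by (simp add: cong_def)
    hence "[x * D = y * D] (mod p)" by (simp add: cong_add_lcancel_nat)
    hence cxy: "[x = y] (mod p)"
      using cong_mult_rcancel_nat ndvd assms(1) prime_imp_coprime coprime_commute by metis
    moreover have "x < J0 + p" "y < J0 + p" using x y m_def assms prime_gt_0_nat by auto
    from cxy have "int p dvd int x - int y" by (simp add: cong_int_iff[symmetric] cong_iff_dvd_diff)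
    moreover have "\<bar>int x - int y\<bar> < int p"
    proof -
      have "m \<le> p - 1" "p > 0" using m_def assms(1) prime_gt_0_nat by auto
      thus ?thesis using x y by auto
    qed
    ultimately show "x = y" using dvd_imp_le_int[of "int x - int y" "int p"] by fastforce
  qed
  have sub: "?f ` {J0..J0+m} \<subseteq> S"
  proof
    fix z assume "z \<in> ?f ` {J0..J0+m}"
    then obtain J where "J \<in> {J0..J0+m}" "z = ?f J" by blast
    moreover have "J0 + m \<le> J1" using m_def assms(4) by simp
    ultimately show "z \<in> S" using assms(5) by auto
  qed
  have "card (?f ` {J0..J0+m}) = m + 1" using card_image[OF inj] by simp
  thus ?thesis using card_mono[OF assms(6) sub] m_def by simp
qed


theorem corollary2p7:
  fixes p D k g0 g1 :: nat and A :: "nat \<Rightarrow> nat set"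
  assumes "prime p"
    and "1 \<le> D" and "D \<le> p - 1"
    and "k \<ge> 1"
    and "\<forall>i\<in>{1..k}. is_D_AP p D (A i)"
    and "g0 < p" and "g1 < p"
    and "dist_pD p D g0 g1 \<ge> int (card (sumset p k A))"
  shows "\<not> (g0 \<in> sumset p k A \<and> g1 \<in> sumset p k A)"
proof
  assume both: "g0 \<in> sumset p k A \<and> g1 \<in> sumset p k A"
  have p0: "p > 0" using assms(1) prime_gt_0_nat by blast
  have Dp: "D < p" using assms(3) p0 by linarith
  obtain b where b: "\<forall>i\<in>{1..k}. b i < D \<and> A i = D_AP_base p D (b i)"
    using assms(5) unfolding is_D_AP_def by metis
  define n where "n i = (p - 1 - b i) div D" for i
  define B where "B = (\<Sum>i=1..k. b i)"
  define N where "N = (\<Sum>i=1..k. n i)"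
  let ?S = "sumset p k A"
  have memA: "x \<in> A i \<longleftrightarrow> (\<exists>j \<le> n i. x = b i + j * D)" if "i \<in> {1..k}" for i x
    using b that unfolding D_AP_base_def n_def by auto
  have repr: "\<exists>J \<le> N. g = (B + J * D) mod p" if gS: "g \<in> ?S" for g
  proof -
    obtain a where a: "g = (\<Sum>i=1..k. a i) mod p" "\<forall>i\<in>{1..k}. a i \<in> A i"
      using gS unfolding sumset_def by blast
    have "\<forall>i\<in>{1..k}. \<exists>j \<le> n i. a i = b i + j * D" using a(2) memA by blast
    then obtain j where j: "\<forall>i\<in>{1..k}. j i \<le> n i \<and> a i = b i + j i * D" by metis
    have "(\<Sum>i=1..k. a i) = (\<Sum>i=1..k. b i + j i * D)" using j by (intro sum.cong) auto
    also have "\<dots> = B + (\<Sum>i=1..k. j i) * D" by (simp add: B_def sum.distrib sum_distrib_right)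
    finally have "g = (B + (\<Sum>i=1..k. j i) * D) mod p" using a(1) by simp
    moreover have "(\<Sum>i=1..k. j i) \<le> N" unfolding N_def using j by (intro sum_mono) auto
    ultimately show ?thesis by blast
  qed
  have ach: "(B + J * D) mod p \<in> ?S" if JN: "J \<le> N" for J
  proof -
    obtain j where j: "\<forall>i\<in>{1..k}. j i \<le> n i" "(\<Sum>i=1..k. j i) = J"
      using split_sum[of "{1..k}" J n] JN N_def by auto
    define a where "a i = b i + j i * D" for i
    have "\<forall>i\<in>{1..k}. a i \<in> A i" using j memA a_def by blast
    moreover have "(\<Sum>i=1..k. a i) = B + J * D"
      using j(2) by (simp add: a_def B_def sum.distrib sum_distrib_right[symmetric])
    ultimately have "\<exists>a'. (B + J * D) mod p = (\<Sum>i=1..k. a' i) mod p \<and> (\<forall>i\<in>{1..k}. a' i \<in> A i)"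
      by (intro exI[of _ a]) simp
    thus ?thesis unfolding sumset_def by simp
  qed
  have fin: "finite ?S"
  proof (rule finite_subset)
    show "?S \<subseteq> {0..<p}" unfolding sumset_def using p0 by auto
  qed simp
  obtain J0 where J0: "J0 \<le> N" "g0 = (B + J0 * D) mod p" using repr both by blast
  obtain J1 where J1: "J1 \<le> N" "g1 = (B + J1 * D) mod p" using repr both by blast
  let ?x = "((int g1 - int g0) * inv_modp p D) mod int p"
  let ?y = "((int g0 - int g1) * inv_modp p D) mod int p"
  have dd: "dist_pD p D g0 g1 = min ?x ?y" unfolding dist_pD_def by simp
  have ylt: "?y < int p" using p0 by simp
  show False
  proof (cases "J0 \<le> J1")
    case True
    have "?x \<le> int (J1 - J0)" using dist_bound[OF assms(1,2) Dp True J0(2) J1(2)] .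
    moreover have "?x < int p" using p0 by simp
    moreover have "min (J1 - J0) (p - 1) + 1 \<le> card ?S"
      using card_bound[OF assms(1,2) Dp True _ fin, of B] ach J1(1) by (meson order_trans)
    ultimately show False using assms(8) dd p0 by linarith
  next
    case False
    hence F: "J1 \<le> J0" by simp
    have "?y \<le> int (J0 - J1)" using dist_bound[OF assms(1,2) Dp F J1(2) J0(2)] .
    moreover have "?y < int p" using p0 by simp
    moreover have "min (J0 - J1) (p - 1) + 1 \<le> card ?S"
      using card_bound[OF assms(1,2) Dp F _ fin, of B] ach J0(1) by (meson order_trans)
    ultimately show False using assms(8) dd p0 by linarith
  qed
qed

end
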